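(* Let $G$ be a finite abstract simplicial complex with connection graph $G'$. For $x\in G$ let $B(x)$ be the closed unit ball of $x$ in $G'$ and $d(x)$ the vertex degree of $x$ in $G'$. Then $d(x)=\sum_{y\in B(x)}\chi(S^+(y))$.
   Context: A finite abstract simplicial complex $G$ is a finite set of non-empty finite sets closed under taking non-empty subsets. The connection graph $G'$ has vertex set $G$, with distinct simplices adjacent iff they intersect; $B(x)$ consists of $x$ and all its neighbors in $G'$. The graph $G_1$ has vertex set $G$ with $x\neq y$ adjacent iff $x\subset y$ or $y\subset x$. For $y\in G$, $S^+(y)=\{z\in G: y\subsetneq z\}$, and $\chi(S^+(y))$ is the Euler characteristic $\sum_K(-1)^{|K|-1}$ over non-empty cliques $K$ of the subgraph of $G_1$ induced on $S^+(y)$ (so $\chi(\emptyset)=0$). *)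

theory Defs
  imports Main
begin

definition simplicial_complex :: "'a set set \<Rightarrow> bool" where
  "simplicial_complex G \<longleftrightarrow> finite G \<and>
     (\<forall>x\<in>G. finite x \<and> x \<noteq> {}) \<and>
     (\<forall>x\<in>G. \<forall>y. y \<subseteq> x \<and> y \<noteq> {} \<longrightarrow> y \<in> G)"

definition conn_adj :: "'a set set \<Rightarrow> 'a set \<Rightarrow> 'a set \<Rightarrow> bool" where
  "conn_adj G x y \<longleftrightarrow> x \<in> G \<and> y \<in> G \<and> x \<noteq> y \<and> x \<inter> y \<noteq> {}"

definition unit_ball :: "'a set set \<Rightarrow> 'a set \<Rightarrow> 'a set set" where
  "unit_ball G x = {x} \<union> {y. conn_adj G x y}"

definition conn_degree :: "'a set set \<Rightarrow> 'a set \<Rightarrow> nat" where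
  "conn_degree G x = card {y. conn_adj G x y}"

definition G1_adj :: "'a set \<Rightarrow> 'a set \<Rightarrow> bool" where
  "G1_adj x y \<longleftrightarrow> x \<noteq> y \<and> (x \<subseteq> y \<or> y \<subseteq> x)"

definition S_plus :: "'a set set \<Rightarrow> 'a set \<Rightarrow> 'a set set" where
  "S_plus G y = {z \<in> G. y \<subset> z}"

definition cliques_G1 :: "'a set set \<Rightarrow> 'a set set set" where
  "cliques_G1 S = {K. K \<subseteq> S \<and> K \<noteq> {} \<and> (\<forall>u\<in>K. \<forall>v\<in>K. u \<noteq> v \<longrightarrow> G1_adj u v)}"

definition chi_G1 :: "'a set set \<Rightarrow> int" where
  "chi_G1 S = (\<Sum>K\<in>cliques_G1 S. (-1) ^ (card K - 1))"

end

theory Submission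
  imports Defs
begin

lemma pow_alt:
  assumes "finite A"
  shows "(\<Sum>T\<in>Pow A. (-1::int) ^ card T) = (if A = {} then 1 else 0)"
  using assms
proof (induction A rule: finite_induct)
  case empty
  then show ?case by simp
next
  case (insert a A)
  have disj: "Pow A \<inter> insert a ` Pow A = {}" using insert.hyps by auto
  have inj: "inj_on (insert a) (Pow A)" unfolding inj_on_def using insert.hyps by (metis PowD Diff_insert_absorb subsetD)
  have fP: "finite (Pow A)" using insert.hyps by simp
  have "(\<Sum>T\<in>Pow (insert a A). (-1::int) ^ card T)
      = (\<Sum>T\<in>Pow A. (-1::int) ^ card T) + (\<Sum>T\<in>insert a ` Pow A. (-1::int) ^ card T)"
    unfolding Pow_insert using disj fP by (simp add: sum.union_disjoint)
  also have "(\<Sum>T\<in>insert a ` Pow A. (-1::int) ^ card T) = (\<Sum>T\<in>Pow A. (-1::int) ^ card (insert a T))"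
    using inj by (simp add: sum.reindex)
  also have "\<dots> = (\<Sum>T\<in>Pow A. - ((-1::int) ^ card T))"
  proof (rule sum.cong[OF refl])
    fix T assume "T \<in> Pow A"
    then have "finite T" "a \<notin> T" using insert.hyps finite_subset by auto
    then show "(-1::int) ^ card (insert a T) = - ((-1::int) ^ card T)" by simp
  qed
  finally show ?case by (simp add: sum_negf)
qed

lemma interval_alt:
  assumes "finite z" "y \<subseteq> z"
  shows "(\<Sum>m\<in>{m. y \<subseteq> m \<and> m \<subseteq> z}. (-1::int) ^ card m) = (if z = y then (-1) ^ card y else 0)"
proof -
  have eq: "{m. y \<subseteq> m \<and> m \<subseteq> z} = (\<lambda>T. y \<union> T) ` Pow (z - y)"
  proof (intro equalityI subsetI)
    fix m assume "m \<in> {m. y \<subseteq> m \<and> m \<subseteq> z}"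
    then show "m \<in> (\<lambda>T. y \<union> T) ` Pow (z - y)" by (intro image_eqI[of _ _ "m - y"]) auto
  next
    fix m assume "m \<in> (\<lambda>T. y \<union> T) ` Pow (z - y)"
    then show "m \<in> {m. y \<subseteq> m \<and> m \<subseteq> z}" using assms(2) by blast
  qed
  have inj: "inj_on (\<lambda>T. y \<union> T) (Pow (z - y))" unfolding inj_on_def by blast
  have fy: "finite y" using assms finite_subset by blast
  have "(\<Sum>m\<in>{m. y \<subseteq> m \<and> m \<subseteq> z}. (-1::int) ^ card m) = (\<Sum>T\<in>Pow (z - y). (-1::int) ^ card (y \<union> T))"
    unfolding eq using inj by (simp add: sum.reindex)
  also have "\<dots> = (\<Sum>T\<in>Pow (z - y). (-1::int) ^ card y * (-1) ^ card T)"
  proof (rule sum.cong[OF refl])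
    fix T assume "T \<in> Pow (z - y)"
    then have "T \<subseteq> z" "y \<inter> T = {}" by blast+
    then have "finite T" "y \<inter> T = {}" using finite_subset[OF _ assms(1)] by blast+
    then show "(-1::int) ^ card (y \<union> T) = (-1::int) ^ card y * (-1) ^ card T"
      using fy by (simp add: card_Un_disjoint power_add)
  qed
  also have "\<dots> = (-1::int) ^ card y * (\<Sum>T\<in>Pow (z - y). (-1) ^ card T)" by (simp add: sum_distrib_left)
  also have "\<dots> = (if z = y then (-1) ^ card y else 0)"
  proof -
    have "z - y = {} \<longleftrightarrow> z = y" using assms(2) by blast
    then show ?thesis using pow_alt[of "z - y"] assms(1) by simp
  qed
  finally show ?thesis .
qed

lemma chain_min:
  assumes "finite K" "K \<noteq> {}" "\<forall>u\<in>K. \<forall>v\<in>K. u \<noteq> v \<longrightarrow> G1_adj u v"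
  shows "\<exists>m\<in>K. \<forall>u\<in>K. m \<subseteq> u"
  using assms
proof (induction K rule: finite_ne_induct)
  case (singleton x)
  then show ?case by simp
next
  case (insert a K)
  have H: "\<forall>u\<in>insert a K. \<forall>v\<in>insert a K. u \<noteq> v \<longrightarrow> G1_adj u v" by fact
  then have "\<forall>u\<in>K. \<forall>v\<in>K. u \<noteq> v \<longrightarrow> G1_adj u v" by blast
  then obtain m where m: "m \<in> K" "\<forall>u\<in>K. m \<subseteq> u" using insert.IH by blast
  have "a \<noteq> m \<longrightarrow> G1_adj a m" using H m(1) by blast
  then have "a \<subseteq> m \<or> m \<subseteq> a" unfolding G1_adj_def by blast
  then show ?case
  proof
    assume am: "a \<subseteq> m"
    have "\<forall>u\<in>insert a K. a \<subseteq> u" using m(2) am by (metis insertE order_refl order_trans)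
    then show ?thesis by (rule bexI[of _ a]) simp
  next
    assume ma: "m \<subseteq> a"
    have "\<forall>u\<in>insert a K. m \<subseteq> u" using m(2) ma by (metis insertE)
    then show ?thesis using m(1) by (intro bexI[of _ m]) simp_all
  qed
qed

lemma fin_cliques: "finite S \<Longrightarrow> finite (cliques_G1 S)"
proof -
  assume "finite S"
  moreover have "cliques_G1 S \<subseteq> Pow S" unfolding cliques_G1_def by blast
  ultimately show ?thesis using finite_subset by blast
qed

lemma chi_rec:
  assumes "finite G"
  shows "chi_G1 (S_plus G y) = (\<Sum>m\<in>S_plus G y. 1 - chi_G1 (S_plus G m))"
proof -
  have fS: "\<And>w. finite (S_plus G w)" unfolding S_plus_def using assms by auto
  define A where "A m = insert m ` ({{}} \<union> cliques_G1 (S_plus G m))" for m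
  have eq: "cliques_G1 (S_plus G y) = (\<Union>m\<in>S_plus G y. A m)"
  proof
    show "cliques_G1 (S_plus G y) \<subseteq> (\<Union>m\<in>S_plus G y. A m)"
    proof
      fix K assume K: "K \<in> cliques_G1 (S_plus G y)"
      then have Ks: "K \<subseteq> S_plus G y" "K \<noteq> {}" "\<forall>u\<in>K. \<forall>v\<in>K. u \<noteq> v \<longrightarrow> G1_adj u v"
        unfolding cliques_G1_def by auto
      have fK: "finite K" using Ks(1) fS finite_subset by blast
      obtain m where m: "m \<in> K" "\<forall>u\<in>K. m \<subseteq> u" using chain_min[OF fK Ks(2) Ks(3)] by blast
      have "K - {m} \<subseteq> S_plus G m"
      proof
        fix u assume u: "u \<in> K - {m}"
        then have "u \<in> G" "m \<subseteq> u" "u \<noteq> m" using Ks(1) m(2) unfolding S_plus_def by auto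
        then show "u \<in> S_plus G m" unfolding S_plus_def by auto
      qed
      then have Kmem: "K - {m} \<in> {{}} \<union> cliques_G1 (S_plus G m)"
      proof (cases "K - {m} = {}")
        case False
        have "\<forall>u\<in>K - {m}. \<forall>v\<in>K - {m}. u \<noteq> v \<longrightarrow> G1_adj u v" using Ks(3) by blast
        then show ?thesis using False \<open>K - {m} \<subseteq> S_plus G m\<close> unfolding cliques_G1_def by blast
      qed simp
      have Keq: "K = insert m (K - {m})" using m(1) by blast
      have "K \<in> A m" unfolding A_def by (rule image_eqI[where f="insert m", OF Keq Kmem])
      then show "K \<in> (\<Union>m\<in>S_plus G y. A m)" using m Ks(1) by blast
    qed
  next
    show "(\<Union>m\<in>S_plus G y. A m) \<subseteq> cliques_G1 (S_plus G y)"
    proof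
      fix K assume "K \<in> (\<Union>m\<in>S_plus G y. A m)"
      then obtain m K' where m: "m \<in> S_plus G y" and K': "K' \<in> {{}} \<union> cliques_G1 (S_plus G m)"
        and K: "K = insert m K'" unfolding A_def by blast
      have sub: "K' \<subseteq> S_plus G m" and ch: "\<forall>u\<in>K'. \<forall>v\<in>K'. u \<noteq> v \<longrightarrow> G1_adj u v"
        using K' unfolding cliques_G1_def by auto
      have mK: "\<forall>u\<in>K'. u \<in> G \<and> m \<subset> u" using sub unfolding S_plus_def by blast
      have ym: "m \<in> G" "y \<subset> m" using m unfolding S_plus_def by auto
      have "K \<subseteq> S_plus G y"
      proof
        fix u assume "u \<in> K"
        then have "u = m \<or> u \<in> K'" using K by blast
        then show "u \<in> S_plus G y"
        proof
          assume "u = m" then show ?thesis using m by simp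
        next
          assume "u \<in> K'"
          then have "u \<in> G" "m \<subset> u" using mK by auto
          then show ?thesis using ym(2) less_trans[of y m u] unfolding S_plus_def by simp
        qed
      qed
      moreover have "\<forall>u\<in>K. \<forall>v\<in>K. u \<noteq> v \<longrightarrow> G1_adj u v"
      proof (intro ballI impI)
        fix u v assume uv: "u \<in> K" "v \<in> K" "u \<noteq> v"
        then have "(u = m \<or> u \<in> K') \<and> (v = m \<or> v \<in> K')" using K by blast
        then show "G1_adj u v"
        proof (elim conjE disjE)
          assume "u = m" "v = m" then show ?thesis using uv(3) by simp
        next
          assume "u = m" "v \<in> K'" then show ?thesis using mK uv(3) unfolding G1_adj_def by blast
        next
          assume "u \<in> K'" "v = m" then show ?thesis using mK uv(3) unfolding G1_adj_def by blast
        next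
          assume "u \<in> K'" "v \<in> K'" then show ?thesis using ch uv(3) by blast
        qed
      qed
      ultimately show "K \<in> cliques_G1 (S_plus G y)" unfolding cliques_G1_def using K by auto
    qed
  qed
  have fA: "\<forall>m\<in>S_plus G y. finite (A m)" unfolding A_def using fin_cliques fS by auto
  have dA: "\<forall>i\<in>S_plus G y. \<forall>j\<in>S_plus G y. i \<noteq> j \<longrightarrow> A i \<inter> A j = {}"
  proof (intro ballI impI)
    fix i j assume ij: "i \<in> S_plus G y" "j \<in> S_plus G y" "i \<noteq> j"
    show "A i \<inter> A j = {}"
    proof (rule ccontr)
      assume "A i \<inter> A j \<noteq> {}"
      then obtain K1 K2 where K1: "K1 \<in> {{}} \<union> cliques_G1 (S_plus G i)" and K2: "K2 \<in> {{}} \<union> cliques_G1 (S_plus G j)"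
        and e: "insert i K1 = insert j K2" unfolding A_def by blast
      have s1: "K1 \<subseteq> S_plus G i" "K2 \<subseteq> S_plus G j" using K1 K2 unfolding cliques_G1_def by auto
      have "j \<in> K1" "i \<in> K2" using e ij(3) by (metis insertE insertI1)+
      then have "i \<subset> j" "j \<subset> i" using s1 unfolding S_plus_def by blast+
      then show False by simp
    qed
  qed
  have inner: "(\<Sum>K\<in>A m. (-1::int) ^ (card K - 1)) = 1 - chi_G1 (S_plus G m)" for m
  proof -
    have nm: "\<forall>K\<in>{{}} \<union> cliques_G1 (S_plus G m). m \<notin> K \<and> finite K"
    proof
      fix K assume "K \<in> {{}} \<union> cliques_G1 (S_plus G m)"
      then have "K \<subseteq> S_plus G m" unfolding cliques_G1_def by blast
      moreover have "m \<notin> S_plus G m" unfolding S_plus_def by blast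
      ultimately show "m \<notin> K \<and> finite K" using finite_subset[OF _ fS[of m]] by blast
    qed
    have inj: "inj_on (insert m) ({{}} \<union> cliques_G1 (S_plus G m))"
      unfolding inj_on_def using nm by (metis Diff_insert_absorb)
    have "(\<Sum>K\<in>A m. (-1::int) ^ (card K - 1)) = (\<Sum>K\<in>{{}} \<union> cliques_G1 (S_plus G m). (-1::int) ^ (card (insert m K) - 1))"
      unfolding A_def by (simp only: sum.reindex[OF inj] comp_def)
    also have "\<dots> = (\<Sum>K\<in>{{}} \<union> cliques_G1 (S_plus G m). (-1::int) ^ card K)"
      by (rule sum.cong[OF refl]) (use nm in auto)
    also have "\<dots> = 1 + (\<Sum>K\<in>cliques_G1 (S_plus G m). (-1::int) ^ card K)"
      using fin_cliques[OF fS[of m]] by (simp add: cliques_G1_def)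
    also have "(\<Sum>K\<in>cliques_G1 (S_plus G m). (-1::int) ^ card K) = (\<Sum>K\<in>cliques_G1 (S_plus G m). - ((-1::int) ^ (card K - 1)))"
    proof (rule sum.cong[OF refl])
      fix K assume K: "K \<in> cliques_G1 (S_plus G m)"
      then have "card K \<noteq> 0" using nm unfolding cliques_G1_def by auto
      then obtain k where "card K = Suc k" using not0_implies_Suc by blast
      then show "(-1::int) ^ card K = - ((-1::int) ^ (card K - 1))" by simp
    qed
    finally show ?thesis unfolding chi_G1_def by (simp add: sum_negf)
  qed
  have "chi_G1 (S_plus G y) = (\<Sum>m\<in>S_plus G y. \<Sum>K\<in>A m. (-1::int) ^ (card K - 1))"
    unfolding chi_G1_def eq using fS fA dA by (simp add: sum.UNION_disjoint)
  also have "\<dots> = (\<Sum>m\<in>S_plus G y. 1 - chi_G1 (S_plus G m))" using inner by simp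
  finally show ?thesis .
qed


definition gg :: "'a set set \<Rightarrow> 'a set \<Rightarrow> int" where
  "gg G y = (-1) ^ card y * (\<Sum>z\<in>{z. z \<in> G \<and> y \<subseteq> z}. (-1) ^ card z)"

lemma sq_sign: "(-1::int) ^ n * (-1) ^ n = 1"
  by (induct n) auto

lemma sc_facts:
  assumes "simplicial_complex G"
  shows "finite G" "\<And>x. x \<in> G \<Longrightarrow> finite x" "\<And>x. x \<in> G \<Longrightarrow> x \<noteq> {}"
    "\<And>x y. x \<in> G \<Longrightarrow> y \<subseteq> x \<Longrightarrow> y \<noteq> {} \<Longrightarrow> y \<in> G"
  using assms unfolding simplicial_complex_def by blast+

lemma sum_gg:
  assumes sc: "simplicial_complex G" and yG: "y \<in> G"
  shows "(\<Sum>m\<in>{m. m \<in> G \<and> y \<subseteq> m}. gg G m) = 1"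
proof -
  note F = sc_facts[OF sc]
  define M where "M = {m. m \<in> G \<and> y \<subseteq> m}"
  have fM: "finite M" unfolding M_def using F(1) by simp
  have "(\<Sum>m\<in>M. gg G m) = (\<Sum>m\<in>M. \<Sum>z\<in>{z. z \<in> G \<and> m \<subseteq> z}. (-1::int) ^ card m * (-1) ^ card z)"
    unfolding gg_def by (simp add: sum_distrib_left)
  also have "\<dots> = (\<Sum>z\<in>G. \<Sum>m\<in>{m. m \<in> M \<and> m \<subseteq> z}. (-1::int) ^ card m * (-1) ^ card z)"
    by (rule sum.swap_restrict[OF fM F(1)])
  also have "\<dots> = (\<Sum>z\<in>G. if y = z then 1 else 0)"
  proof (rule sum.cong[OF refl])
    fix z assume zG: "z \<in> G"
    show "(\<Sum>m\<in>{m. m \<in> M \<and> m \<subseteq> z}. (-1::int) ^ card m * (-1) ^ card z) = (if y = z then 1 else 0)"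
    proof (cases "y \<subseteq> z")
      case True
      have "{m. m \<in> M \<and> m \<subseteq> z} = {m. y \<subseteq> m \<and> m \<subseteq> z}"
      proof (intro equalityI subsetI)
        fix m assume "m \<in> {m. y \<subseteq> m \<and> m \<subseteq> z}"
        then have m: "y \<subseteq> m" "m \<subseteq> z" by auto
        have "m \<noteq> {}" using m(1) F(3)[OF yG] by blast
        then have "m \<in> G" using F(4)[OF zG m(2)] by blast
        then show "m \<in> {m. m \<in> M \<and> m \<subseteq> z}" using m unfolding M_def by blast
      qed (auto simp: M_def)
      then have "(\<Sum>m\<in>{m. m \<in> M \<and> m \<subseteq> z}. (-1::int) ^ card m * (-1) ^ card z)
          = (\<Sum>m\<in>{m. y \<subseteq> m \<and> m \<subseteq> z}. (-1::int) ^ card m) * (-1) ^ card z"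
        by (simp add: sum_distrib_right)
      also have "\<dots> = (if z = y then (-1) ^ card y else 0) * (-1) ^ card z"
        using interval_alt[OF F(2)[OF zG] True] by simp
      also have "\<dots> = (if y = z then 1 else 0)" using sq_sign by auto
      finally show ?thesis .
    next
      case False
      then have E: "{m. m \<in> M \<and> m \<subseteq> z} = {}" unfolding M_def by blast
      have "y \<noteq> z" using False by blast
      then show ?thesis by (simp only: E sum.empty) simp
    qed
  qed
  also have "\<dots> = 1" using yG F(1) by simp
  finally show ?thesis unfolding M_def .
qed

lemma g_main:
  assumes sc: "simplicial_complex G"
  shows "y \<in> G \<Longrightarrow> 1 - chi_G1 (S_plus G y) = gg G y"
proof (induction "card (S_plus G y)" arbitrary: y rule: less_induct)
  case less
  note F = sc_facts[OF sc]
  have fS: "\<And>w. finite (S_plus G w)" unfolding S_plus_def using F(1) by auto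
  have IH: "1 - chi_G1 (S_plus G m) = gg G m" if m: "m \<in> S_plus G y" for m
  proof -
    have "S_plus G m \<subset> S_plus G y"
    proof
      show "S_plus G m \<subseteq> S_plus G y"
      proof
        fix u assume "u \<in> S_plus G m"
        then have u: "u \<in> G" "m \<subset> u" unfolding S_plus_def by blast+
        have "y \<subset> m" using m unfolding S_plus_def by blast
        then have "y \<subset> u" using u(2) by (rule less_trans)
        then show "u \<in> S_plus G y" using u(1) unfolding S_plus_def by blast
      qed
      show "S_plus G m \<noteq> S_plus G y" using m unfolding S_plus_def by blast
    qed
    then have lt: "card (S_plus G m) < card (S_plus G y)" using fS[of y] by (rule psubset_card_mono[rotated])
    have mG: "m \<in> G" using m unfolding S_plus_def by blast
    show ?thesis by (rule less.hyps[OF lt mG])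
  qed
  have "chi_G1 (S_plus G y) = (\<Sum>m\<in>S_plus G y. gg G m)"
    using chi_rec[OF F(1), of y] IH by simp
  moreover have "{m. m \<in> G \<and> y \<subseteq> m} = insert y (S_plus G y)" unfolding S_plus_def using less.prems by blast
  moreover have "y \<notin> S_plus G y" unfolding S_plus_def by blast
  ultimately have "gg G y + chi_G1 (S_plus G y) = 1"
    using sum_gg[OF sc less.prems] fS[of y] by simp
  then show ?case by simp
qed

theorem mainTheorem13:
  fixes G :: "'a set set" and x :: "'a set"
  assumes "simplicial_complex G" and "x \<in> G"
  shows "int (conn_degree G x) = (\<Sum>y\<in>unit_ball G x. chi_G1 (S_plus G y))"
proof -
  note F = sc_facts[OF assms(1)]
  have xne: "x \<noteq> {}" using F(3)[OF assms(2)] .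
  define B where "B = unit_ball G x"
  have Beq: "B = {y. y \<in> G \<and> y \<inter> x \<noteq> {}}"
    unfolding B_def unit_ball_def conn_adj_def using assms(2) xne by blast
  have fB: "finite B" unfolding Beq using F(1) by simp
  have xB: "x \<in> B" unfolding Beq using assms(2) xne by blast
  have xn: "x \<notin> {y. conn_adj G x y}" unfolding conn_adj_def by simp
  have cset: "{y. conn_adj G x y} = B - {x}" unfolding B_def unit_ball_def using xn by blast
  have "B \<noteq> {}" using xB by blast
  then have "0 < card B" using fB by (simp add: card_gt_0_iff)
  have "card (B - {x}) = card B - 1" using xB by (rule card_Diff_singleton)
  then have "int (card (B - {x})) = int (card B) - 1" using \<open>0 < card B\<close> by linarith
  then have deg: "int (conn_degree G x) = int (card B) - 1"
    unfolding conn_degree_def cset .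
  have "(\<Sum>y\<in>B. chi_G1 (S_plus G y)) = (\<Sum>y\<in>B. 1 - gg G y)"
  proof (rule sum.cong[OF refl])
    fix y assume "y \<in> B"
    then have yG: "y \<in> G" unfolding Beq by blast
    show "chi_G1 (S_plus G y) = 1 - gg G y" using g_main[OF assms(1) yG] by linarith
  qed
  also have "\<dots> = int (card B) - (\<Sum>y\<in>B. gg G y)" by (simp add: sum_subtractf)
  finally have eq1: "(\<Sum>y\<in>B. chi_G1 (S_plus G y)) = int (card B) - (\<Sum>y\<in>B. gg G y)" .
  have "(\<Sum>y\<in>B. gg G y) = (\<Sum>y\<in>B. \<Sum>z\<in>{z. z \<in> G \<and> y \<subseteq> z}. (-1::int) ^ card y * (-1) ^ card z)"
    unfolding gg_def by (simp add: sum_distrib_left)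
  also have "\<dots> = (\<Sum>z\<in>G. \<Sum>y\<in>{y. y \<in> B \<and> y \<subseteq> z}. (-1::int) ^ card y * (-1) ^ card z)"
    by (rule sum.swap_restrict[OF fB F(1)])
  also have "\<dots> = (\<Sum>z\<in>G. - (if z \<subseteq> x then (-1) ^ card z else 0))"
  proof (rule sum.cong[OF refl])
    fix z assume zG: "z \<in> G"
    have fz: "finite z" using F(2)[OF zG] .
    have "{y. y \<in> B \<and> y \<subseteq> z} = Pow z - Pow (z - x)"
    proof (intro equalityI subsetI)
      fix y assume "y \<in> Pow z - Pow (z - x)"
      then have y: "y \<subseteq> z" "y \<inter> x \<noteq> {}" by auto
      then have "y \<in> G" using F(4)[OF zG y(1)] by blast
      then show "y \<in> {y. y \<in> B \<and> y \<subseteq> z}" using y unfolding Beq by blast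
    next
      fix y assume "y \<in> {y. y \<in> B \<and> y \<subseteq> z}"
      then have "y \<subseteq> z" "y \<inter> x \<noteq> {}" unfolding Beq by auto
      then show "y \<in> Pow z - Pow (z - x)" by blast
    qed
    then have "(\<Sum>y\<in>{y. y \<in> B \<and> y \<subseteq> z}. (-1::int) ^ card y) = (\<Sum>y\<in>Pow z. (-1::int) ^ card y) - (\<Sum>y\<in>Pow (z - x). (-1::int) ^ card y)"
      using sum_diff[OF finite_Pow_iff[THEN iffD2, OF fz], of "Pow (z - x)"] by auto
    also have "\<dots> = - (if z \<subseteq> x then 1 else 0)"
    proof -
      have "z \<noteq> {}" using F(3)[OF zG] .
      moreover have "z - x = {} \<longleftrightarrow> z \<subseteq> x" by blast
      ultimately show ?thesis using pow_alt[OF fz] pow_alt[of "z - x"] fz by simp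
    qed
    finally have "(\<Sum>y\<in>{y. y \<in> B \<and> y \<subseteq> z}. (-1::int) ^ card y) = - (if z \<subseteq> x then 1 else 0)" .
    then show "(\<Sum>y\<in>{y. y \<in> B \<and> y \<subseteq> z}. (-1::int) ^ card y * (-1) ^ card z) = - (if z \<subseteq> x then (-1) ^ card z else 0)"
      by (simp add: sum_distrib_right[symmetric])
  qed
  also have "\<dots> = - (\<Sum>z\<in>{z. z \<in> G \<and> z \<subseteq> x}. (-1::int) ^ card z)"
    using F(1) by (simp add: sum_negf sum.inter_filter)
  also have "{z. z \<in> G \<and> z \<subseteq> x} = Pow x - {{}}"
  proof (intro equalityI subsetI)
    fix z assume "z \<in> Pow x - {{}}"
    then show "z \<in> {z. z \<in> G \<and> z \<subseteq> x}" using F(4)[OF assms(2)] by blast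
  next
    fix z assume "z \<in> {z. z \<in> G \<and> z \<subseteq> x}"
    then have "z \<subseteq> x" "z \<noteq> {}" using F(3) by auto
    then show "z \<in> Pow x - {{}}" by blast
  qed
  also have "(\<Sum>z\<in>Pow x - {{}}. (-1::int) ^ card z) = -1"
    using pow_alt[OF F(2)[OF assms(2)]] xne F(2)[OF assms(2)] by (simp add: sum_diff1)
  finally have "(\<Sum>y\<in>B. gg G y) = 1" by simp
  then show ?thesis using eq1 deg unfolding B_def by simp
qed

end
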